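(* Let $p$ and $q$ be primes with $q\equiv 1 \pmod p$. Let $N=C_q$ be a cyclic group of order $q$ and let $H=\langle x\rangle\times\langle y\rangle$ be an elementary abelian group of order $p^2$. Let $\langle x\rangle$ act faithfully on $N$ and let $\langle y\rangle$ act trivially on $N$, and let $G=N\rtimes H$ be the corresponding semidirect product. Let $U=N\langle x\rangle$ and $V=N\langle xy\rangle$. Then: (i) $U$ and $V$ are both subnormal in $G$, and $G=UV$; (ii) $O_p(G)=\langle y\rangle$ and $O_p(U)=O_p(V)=1$; in particular $O_p(G)\neq O_p(U)O_p(V)$.
   Context: For a finite group $X$ and prime $p$, $O_p(X)$ denotes the largest normal $p$-subgroup of $X$. *)

theory Defs
  imports "HOL-Algebra.Algebra"
begin

definition p_subgroup :: "('a, 'b) monoid_scheme \<Rightarrow> nat \<Rightarrow> 'a set \<Rightarrow> bool" where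
  "p_subgroup G p P \<longleftrightarrow> subgroup P G \<and> finite P \<and> (\<exists>k. card P = p ^ k)"

definition O_p :: "('a, 'b) monoid_scheme \<Rightarrow> nat \<Rightarrow> 'a set" where
  "O_p Gr p = (THE P. normal P Gr \<and> p_subgroup Gr p P \<and>
                 (\<forall>Q. normal Q Gr \<and> p_subgroup Gr p Q \<longrightarrow> Q \<subseteq> P))"

inductive subnormal :: "('a, 'b) monoid_scheme \<Rightarrow> 'a set \<Rightarrow> bool" for G where
  top: "subnormal G (carrier G)"
| step: "subnormal G K \<Longrightarrow> normal H (G\<lparr>carrier := K\<rparr>) \<Longrightarrow> subnormal G H"

end

theory Submission
  imports Defs
begin

lemma smI: "a \<in> A \<Longrightarrow> b \<in> B \<Longrightarrow> a \<otimes>\<^bsub>G\<^esub> b \<in> A <#>\<^bsub>G\<^esub> B"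
  unfolding set_mult_def by blast

lemma smE: assumes "g \<in> A <#>\<^bsub>G\<^esub> B"
  obtains a b where "a \<in> A" "b \<in> B" "g = a \<otimes>\<^bsub>G\<^esub> b"
  using assms unfolding set_mult_def by blast

lemma O_p_eqI:
  assumes "normal P Gr" "p_subgroup Gr p P"
    "\<And>Q. normal Q Gr \<Longrightarrow> p_subgroup Gr p Q \<Longrightarrow> Q \<subseteq> P"
  shows "O_p Gr p = P"
  unfolding O_p_def using assms by (intro the_equality) (auto intro: subset_antisym)

context group begin

definition cent :: "'a set \<Rightarrow> 'a set" where
  "cent A = {g \<in> carrier G. \<forall>a\<in>A. g \<otimes> a = a \<otimes> g}"

lemma cent_subgroup: assumes "A \<subseteq> carrier G" shows "subgroup (cent A) G"
proof (rule subgroupI)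
  show "cent A \<subseteq> carrier G" by (auto simp: cent_def)
  show "cent A \<noteq> {}" using assms by (auto simp: cent_def intro!: exI[of _ \<one>])
next
  fix g assume g: "g \<in> cent A"
  show "inv g \<in> cent A" unfolding cent_def
  proof (intro CollectI conjI ballI)
    show "inv g \<in> carrier G" using g by (auto simp: cent_def)
    fix a assume a: "a \<in> A"
    have gc: "g \<in> carrier G" and ga: "g \<otimes> a = a \<otimes> g" using g a by (auto simp: cent_def)
    have ac: "a \<in> carrier G" using a assms by auto
    have "inv g \<otimes> a = inv g \<otimes> (a \<otimes> g) \<otimes> inv g" using gc ac by (simp add: m_assoc)
    also have "\<dots> = inv g \<otimes> (g \<otimes> a) \<otimes> inv g" using ga by simp
    also have "\<dots> = a \<otimes> inv g" using gc ac by (simp add: m_assoc[symmetric])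
    finally show "inv g \<otimes> a = a \<otimes> inv g" .
  qed
next
  fix g h assume g: "g \<in> cent A" and h: "h \<in> cent A"
  show "g \<otimes> h \<in> cent A" unfolding cent_def
  proof (intro CollectI conjI ballI)
    show "g \<otimes> h \<in> carrier G" using g h by (auto simp: cent_def)
    fix a assume a: "a \<in> A"
    have ac: "a \<in> carrier G" using a assms by auto
    have gc: "g \<in> carrier G" and ga: "g \<otimes> a = a \<otimes> g" using g a by (auto simp: cent_def)
    have hc: "h \<in> carrier G" and ha: "h \<otimes> a = a \<otimes> h" using h a by (auto simp: cent_def)
    have "g \<otimes> h \<otimes> a = g \<otimes> (a \<otimes> h)" using gc hc ac ha by (simp add: m_assoc)
    also have "\<dots> = (a \<otimes> g) \<otimes> h" using gc hc ac ga by (simp add: m_assoc[symmetric])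
    finally show "g \<otimes> h \<otimes> a = a \<otimes> (g \<otimes> h)" using gc hc ac by (simp add: m_assoc)
  qed
qed

lemma gen_cent: "A \<subseteq> carrier G \<Longrightarrow> S \<subseteq> cent A \<Longrightarrow> generate G S \<subseteq> cent A"
  by (simp add: generate_subgroup_incl cent_subgroup)

lemma pow_card_one:
  assumes "subgroup K G" "finite K" "a \<in> K" shows "a [^] card K = \<one>"
proof -
  interpret K: group "G\<lparr>carrier := K\<rparr>" using assms(1) by (rule subgroup_imp_group)
  have "a [^]\<^bsub>G\<lparr>carrier := K\<rparr>\<^esub> order (G\<lparr>carrier := K\<rparr>) = \<one>\<^bsub>G\<lparr>carrier := K\<rparr>\<^esub>"
    by (rule K.pow_order_eq_1) (simp add: assms)
  thus ?thesis by (simp add: order_def nat_pow_consistent[symmetric])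
qed

lemma coprime_one:
  fixes p q k :: nat
  assumes "a \<in> carrier G" "a [^] (p^k) = \<one>" "a [^] q = \<one>" "Factorial_Ring.prime p" "Factorial_Ring.prime q" "p \<noteq> q"
  shows "a = \<one>"
proof -
  have 1: "ord a dvd p^k" using assms pow_eq_id by blast
  have 2: "ord a dvd q" using assms pow_eq_id by blast
  have "ord a = 1 \<or> ord a = q" using 2 assms(5) prime_nat_iff by blast
  moreover have "ord a \<noteq> q"
  proof
    assume "ord a = q"
    then have "q dvd p" using 1 assms(5) prime_dvd_power by metis
    then have "q = 1 \<or> q = p" using assms(4) prime_nat_iff by blast
    then show False using assms(5,6) prime_nat_iff by auto
  qed
  ultimately show ?thesis using ord_eq_1 assms(1) by blast
qed

lemma comm_of_commutator:
  assumes "a \<in> carrier G" "b \<in> carrier G" "a \<otimes> b \<otimes> inv a \<otimes> inv b = \<one>"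
  shows "a \<otimes> b = b \<otimes> a"
proof -
  have c: "inv b \<otimes> (b \<otimes> a) = a" using assms(1,2) by (simp add: m_assoc[symmetric])
  have "a \<otimes> b = (a \<otimes> b \<otimes> inv a \<otimes> inv b) \<otimes> (b \<otimes> a)" using assms(1,2) by (simp add: m_assoc c)
  thus ?thesis using assms by simp
qed

end

theorem theorem3p3:
  fixes G (structure) and p q :: nat and N :: "'a set" and x y :: 'a
  assumes "group G" and "finite (carrier G)"
    and "Factorial_Ring.prime p" and "Factorial_Ring.prime q" and "q mod p = 1"
    and N_normal: "N \<lhd> G" and N_card: "card N = q"
    and x_in: "x \<in> carrier G" and y_in: "y \<in> carrier G"
    and "group.ord G x = p" and "group.ord G y = p"
    and "x \<otimes> y = y \<otimes> x"
    and H_card: "card (generate G {x, y}) = p ^ 2"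
    and "N \<inter> generate G {x, y} = {\<one>}"
    and "N <#> generate G {x, y} = carrier G"
    and x_faithful: "\<forall>h \<in> generate G {x}. (\<forall>n \<in> N. h \<otimes> n \<otimes> inv h = n) \<longrightarrow> h = \<one>"
    and y_trivial: "\<forall>n \<in> N. y \<otimes> n \<otimes> inv y = n"
  defines "U \<equiv> N <#> generate G {x}"
    and "V \<equiv> N <#> generate G {x \<otimes> y}"
  shows "subnormal G U \<and> subnormal G V \<and> U <#> V = carrier G
     \<and> O_p G p = generate G {y}
     \<and> O_p (G\<lparr>carrier := U\<rparr>) p = {\<one>}
     \<and> O_p (G\<lparr>carrier := V\<rparr>) p = {\<one>}
     \<and> O_p G p \<noteq> O_p (G\<lparr>carrier := U\<rparr>) p <#> O_p (G\<lparr>carrier := V\<rparr>) p"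
proof -
  interpret group G by (rule assms(1))
  note U_def = assms(18) and V_def = assms(19)
  have fin: "finite (carrier G)" by (rule assms(2))
  have pp: "Factorial_Ring.prime p" and qp: "Factorial_Ring.prime q" by (rule assms(3), rule assms(4))
  have pq: "p \<noteq> q" using assms(5) by auto
  have ordx: "ord x = p" and ordy: "ord y = p" using assms(10,11) by auto
  have xy: "x \<otimes> y = y \<otimes> x" by (rule assms(12))
  have NH: "N <#> generate G {x, y} = carrier G" by (rule assms(15))
  have Nsub: "subgroup N G" using N_normal normal_imp_subgroup by blast
  have NG: "N \<subseteq> carrier G" using Nsub subgroup.subset by blast
  have finN: "finite N" using NG fin finite_subset by blast
  define HH where "HH = generate G {x, y}"
  define XX where "XX = generate G {x}"
  define YY where "YY = generate G {y}"
  define WW where "WW = generate G {x \<otimes> y}"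
  have xyc: "x \<otimes> y \<in> carrier G" using x_in y_in by simp
  have Hsub: "subgroup HH G" unfolding HH_def using x_in y_in by (intro generate_is_subgroup) auto
  have Xsub: "subgroup XX G" unfolding XX_def using x_in by (intro generate_is_subgroup) auto
  have Ysub: "subgroup YY G" unfolding YY_def using y_in by (intro generate_is_subgroup) auto
  have Wsub: "subgroup WW G" unfolding WW_def using xyc by (intro generate_is_subgroup) auto
  have xH: "x \<in> HH" and yH: "y \<in> HH" unfolding HH_def by (auto intro: generate.incl)
  have XH: "XX \<subseteq> HH" unfolding XX_def using xH Hsub by (intro generate_subgroup_incl) auto
  have YH: "YY \<subseteq> HH" unfolding YY_def using yH Hsub by (intro generate_subgroup_incl) auto
  have WH: "WW \<subseteq> HH" unfolding WW_def using xH yH Hsub by (intro generate_subgroup_incl) (auto intro: subgroup.m_closed)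
  have HG: "HH \<subseteq> carrier G" using Hsub subgroup.subset by blast
  have xX: "x \<in> XX" unfolding XX_def by (auto intro: generate.incl)
  have yY: "y \<in> YY" unfolding YY_def by (auto intro: generate.incl)
  have xyW: "x \<otimes> y \<in> WW" unfolding WW_def by (auto intro: generate.incl)
  have cardY: "card YY = p" unfolding YY_def using generate_pow_card[OF y_in] ordy by simp
  have finY: "finite YY" using Ysub fin finite_subset subgroup.subset by metis

  have H_xy: "HH \<subseteq> cent {x, y}" unfolding HH_def
    using x_in y_in xy by (intro gen_cent) (auto simp: cent_def)
  have H_ab: "HH \<subseteq> cent HH" unfolding HH_def[symmetric] 
  proof -
    have "{x, y} \<subseteq> cent HH" using H_xy x_in y_in HG by (auto simp: cent_def)
    thus "HH \<subseteq> cent HH" unfolding HH_def using HG HH_def by (intro gen_cent) auto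
  qed
  have H_comm: "\<And>a b. a \<in> HH \<Longrightarrow> b \<in> HH \<Longrightarrow> a \<otimes> b = b \<otimes> a"
    using H_ab by (auto simp: cent_def)
  have powN: "\<And>a. a \<in> N \<Longrightarrow> a [^] q = \<one>"
    using pow_card_one[OF Nsub finN] N_card by simp
  have N_ab: "N \<subseteq> cent N"
  proof
    fix a assume aN: "a \<in> N"
    have ac: "a \<in> carrier G" using aN NG by auto
    show "a \<in> cent N"
    proof (cases "a = \<one>")
      case True thus ?thesis using NG by (auto simp: cent_def)
    next
      case False
      have "ord a dvd q" using powN[OF aN] pow_eq_id[OF ac] by simp
      moreover have "ord a \<noteq> 1" using False ord_eq_1[OF ac] by simp
      ultimately have oa: "ord a = q" using qp prime_nat_iff by blast
      have sub: "generate G {a} \<subseteq> N" using aN Nsub by (intro generate_subgroup_incl) auto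
      have "card (generate G {a}) = card N" using generate_pow_card[OF ac] oa N_card by simp
      hence eq: "generate G {a} = N" using sub finN card_subset_eq by blast
      have "generate G {a} \<subseteq> cent {a}" using ac by (intro gen_cent) (auto simp: cent_def)
      hence "N \<subseteq> cent {a}" using eq by simp
      thus ?thesis using ac by (auto simp: cent_def)
    qed
  qed
  have centN: "subgroup (cent N) G" using NG by (rule cent_subgroup)
  have y_cN: "y \<in> cent N"
  proof -
    have "\<forall>n\<in>N. y \<otimes> n = n \<otimes> y"
    proof
      fix n assume nN: "n \<in> N"
      have nc: "n \<in> carrier G" using nN NG by auto
      have "y \<otimes> n = y \<otimes> n \<otimes> inv y \<otimes> y" using nc y_in by (simp add: m_assoc)
      also have "\<dots> = n \<otimes> y" using y_trivial nN by simp
      finally show "y \<otimes> n = n \<otimes> y" .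
    qed
    thus ?thesis using y_in by (simp add: cent_def)
  qed
  have Y_cN: "YY \<subseteq> cent N" unfolding YY_def using NG y_cN by (intro gen_cent) auto
  have faithful: "\<And>h. h \<in> XX \<Longrightarrow> h \<in> cent N \<Longrightarrow> h = \<one>"
  proof -
    fix h assume hX: "h \<in> XX" and hc: "h \<in> cent N"
    have hG: "h \<in> carrier G" using hc by (simp add: cent_def)
    have "\<forall>n\<in>N. h \<otimes> n \<otimes> inv h = n"
    proof
      fix n assume nN: "n \<in> N"
      have nc: "n \<in> carrier G" using nN NG by auto
      have "h \<otimes> n = n \<otimes> h" using hc nN by (simp add: cent_def)
      hence "h \<otimes> n \<otimes> inv h = n \<otimes> h \<otimes> inv h" by simp
      also have "\<dots> = n" using nc hG by (simp add: m_assoc)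
      finally show "h \<otimes> n \<otimes> inv h = n" .
    qed
    thus "h = \<one>" using x_faithful hX unfolding XX_def by blast
  qed
  have y_central: "y \<in> cent (carrier G)"
  proof -
    have "\<forall>g\<in>carrier G. y \<otimes> g = g \<otimes> y"
    proof
      fix g assume "g \<in> carrier G"
      then obtain m h where mN: "m \<in> N" and hH: "h \<in> HH" and g: "g = m \<otimes> h"
        using NH unfolding HH_def by (metis smE)
      have mc: "m \<in> carrier G" using mN NG by auto
      have hc: "h \<in> carrier G" using hH HG by auto
      have ym: "y \<otimes> m = m \<otimes> y" using y_cN mN by (simp add: cent_def)
      have yh: "y \<otimes> h = h \<otimes> y" using H_comm[OF yH hH] .
      have "y \<otimes> (m \<otimes> h) = (y \<otimes> m) \<otimes> h" using mc hc y_in by (simp add: m_assoc)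
      also have "\<dots> = m \<otimes> (y \<otimes> h)" using mc hc y_in ym by (simp add: m_assoc)
      also have "\<dots> = (m \<otimes> h) \<otimes> y" using mc hc y_in yh by (simp add: m_assoc)
      finally show "y \<otimes> g = g \<otimes> y" using g by simp
    qed
    thus ?thesis using y_in by (simp add: cent_def)
  qed
  have Y_central: "YY \<subseteq> cent (carrier G)" unfolding YY_def using y_central by (intro gen_cent) auto
  have Y_normal: "YY \<lhd> G"
    unfolding normal_inv_iff
  proof (intro conjI ballI)
    show "subgroup YY G" by (rule Ysub)
    fix g z assume g: "g \<in> carrier G" and z: "z \<in> YY"
    have zc: "z \<in> carrier G" using z Ysub subgroup.subset by blast
    have "z \<otimes> g = g \<otimes> z" using Y_central z g by (auto simp: cent_def)
    hence "g \<otimes> z \<otimes> inv g = z \<otimes> g \<otimes> inv g" by simp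
    also have "\<dots> = z" using zc g by (simp add: m_assoc)
    finally show "g \<otimes> z \<otimes> inv g \<in> YY" using z by simp
  qed

  have NK_sub: "\<And>K. subgroup K G \<Longrightarrow> subgroup (N <#> K) G"
  proof -
    fix K assume "subgroup K G"
    then interpret second_isomorphism_grp N G K
      using N_normal by (intro second_isomorphism_grp.intro) (simp_all add: second_isomorphism_grp_axioms_def)
    show "subgroup (N <#> K) G" by (rule normal_set_mult_subgroup)
  qed
  have NK_normal: "\<And>K. subgroup K G \<Longrightarrow> K \<subseteq> HH \<Longrightarrow> (N <#> K) \<lhd> G"
  proof -
    fix K assume Ks: "subgroup K G" and KH: "K \<subseteq> HH"
    show "(N <#> K) \<lhd> G"
      unfolding normal_inv_iff
    proof (intro conjI ballI)
      show "subgroup (N <#> K) G" using Ks by (rule NK_sub)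
      fix g u assume g: "g \<in> carrier G" and u: "u \<in> N <#> K"
      obtain m h where mN: "m \<in> N" and hH: "h \<in> HH" and gmh: "g = m \<otimes> h"
        using g NH unfolding HH_def by (metis smE)
      obtain n k where nN: "n \<in> N" and kK: "k \<in> K" and unk: "u = n \<otimes> k"
        using u by (metis smE)
      have kH: "k \<in> HH" using kK KH by auto
      have mc: "m \<in> carrier G" using mN NG by auto
      have nc: "n \<in> carrier G" using nN NG by auto
      have hc: "h \<in> carrier G" using hH HG by auto
      have kc: "k \<in> carrier G" using kH HG by auto
      have hk: "h \<otimes> k = k \<otimes> h" using H_comm[OF hH kH] .
      have kh': "k \<otimes> inv h = inv h \<otimes> k"
      proof -
        have "k \<otimes> inv h = inv h \<otimes> (h \<otimes> k) \<otimes> inv h" using hc kc by (simp add: m_assoc[symmetric])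
        also have "\<dots> = inv h \<otimes> (k \<otimes> h) \<otimes> inv h" using hk by simp
        also have "\<dots> = inv h \<otimes> k" using hc kc by (simp add: m_assoc)
        finally show ?thesis .
      qed
      have n1: "h \<otimes> n \<otimes> inv h \<in> N" using N_normal hc nN unfolding normal_inv_iff by blast
      have n2: "k \<otimes> inv m \<otimes> inv k \<in> N" using N_normal kc mN Nsub unfolding normal_inv_iff
        by (blast intro: subgroup.m_inv_closed)
      have "g \<otimes> u \<otimes> inv g = m \<otimes> h \<otimes> n \<otimes> (k \<otimes> inv h) \<otimes> inv m"
        using gmh unk mc hc nc kc by (simp add: m_assoc inv_mult_group)
      also have "\<dots> = m \<otimes> h \<otimes> n \<otimes> (inv h \<otimes> k) \<otimes> inv m" using kh' by simp
      also have "\<dots> = (m \<otimes> (h \<otimes> n \<otimes> inv h) \<otimes> (k \<otimes> inv m \<otimes> inv k)) \<otimes> k"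
        using mc hc nc kc by (simp add: m_assoc)
      finally have eq: "g \<otimes> u \<otimes> inv g = (m \<otimes> (h \<otimes> n \<otimes> inv h) \<otimes> (k \<otimes> inv m \<otimes> inv k)) \<otimes> k" .
      have "m \<otimes> (h \<otimes> n \<otimes> inv h) \<otimes> (k \<otimes> inv m \<otimes> inv k) \<in> N"
        using mN n1 n2 Nsub by (blast intro: subgroup.m_closed)
      thus "g \<otimes> u \<otimes> inv g \<in> N <#> K" using eq kK by (simp add: smI)
    qed
  qed
  have U_normal: "U \<lhd> G" unfolding U_def XX_def[symmetric] using Xsub XH by (rule NK_normal)
  have V_normal: "V \<lhd> G" unfolding V_def WW_def[symmetric] using Wsub WH by (rule NK_normal)
  have GG: "G\<lparr>carrier := carrier G\<rparr> = G" by simp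
  have subU: "subnormal G U" using subnormal.step[OF subnormal.top] U_normal GG by metis
  have subV: "subnormal G V" using subnormal.step[OF subnormal.top] V_normal GG by metis

  have Usub: "subgroup U G" using U_normal normal_imp_subgroup by blast
  have Vsub: "subgroup V G" using V_normal normal_imp_subgroup by blast
  have oneX: "\<one> \<in> XX" and oneW: "\<one> \<in> WW" and oneY: "\<one> \<in> YY" and oneN: "\<one> \<in> N"
    using Xsub Wsub Ysub Nsub subgroup.one_closed by blast+
  have NU: "N \<subseteq> U"
  proof
    fix n assume nN: "n \<in> N"
    have "n \<otimes> \<one> \<in> U" unfolding U_def XX_def[symmetric] using nN oneX by (rule smI)
    thus "n \<in> U" using nN NG by auto
  qed
  have NV: "N \<subseteq> V"
  proof
    fix n assume nN: "n \<in> N"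
    have "n \<otimes> \<one> \<in> V" unfolding V_def WW_def[symmetric] using nN oneW by (rule smI)
    thus "n \<in> V" using nN NG by auto
  qed
  have xU: "x \<in> U"
  proof -
    have "\<one> \<otimes> x \<in> U" unfolding U_def XX_def[symmetric] using oneN xX by (rule smI)
    thus ?thesis using x_in by simp
  qed
  have xyV: "x \<otimes> y \<in> V"
  proof -
    have "\<one> \<otimes> (x \<otimes> y) \<in> V" unfolding V_def WW_def[symmetric] using oneN xyW by (rule smI)
    thus ?thesis using xyc by simp
  qed
  have oneU: "\<one> \<in> U" and oneV: "\<one> \<in> V" using Usub Vsub subgroup.one_closed by blast+
  have UV: "U <#> V = carrier G"
  proof
    show "U <#> V \<subseteq> carrier G" using Usub Vsub subgroup.subset by (metis setmult_subset_G)
    interpret second_isomorphism_grp U G V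
      using U_normal Vsub by (intro second_isomorphism_grp.intro) (simp_all add: second_isomorphism_grp_axioms_def)
    have UVsub: "subgroup (U <#> V) G" by (rule normal_set_mult_subgroup)
    have NUV: "N \<subseteq> U <#> V"
    proof
      fix n assume nN: "n \<in> N"
      have "n \<otimes> \<one> \<in> U <#> V" using NU nN oneV by (intro smI) auto
      thus "n \<in> U <#> V" using nN NG by auto
    qed
    have "x \<otimes> \<one> \<in> U <#> V" using xU oneV by (rule smI)
    hence xUV: "x \<in> U <#> V" using x_in by simp
    have "inv x \<otimes> (x \<otimes> y) \<in> U <#> V" using xU xyV Usub by (intro smI) (auto intro: subgroup.m_inv_closed)
    hence yUV: "y \<in> U <#> V" using x_in y_in by (simp add: m_assoc[symmetric])
    have HUV: "HH \<subseteq> U <#> V" unfolding HH_def using xUV yUV UVsub by (intro generate_subgroup_incl) auto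
    show "carrier G \<subseteq> U <#> V"
    proof
      fix g assume "g \<in> carrier G"
      then obtain m h where mN: "m \<in> N" and hH: "h \<in> HH" and g: "g = m \<otimes> h"
        using NH unfolding HH_def by (metis smE)
      show "g \<in> U <#> V" using g NUV HUV mN hH UVsub by (auto intro: subgroup.m_closed)
    qed
  qed

  have comm_arg: "\<And>z k. z \<in> carrier G \<Longrightarrow> (\<And>n. n \<in> N \<Longrightarrow> (z \<otimes> n \<otimes> inv z \<otimes> inv n) [^] ((p::nat)^k) = \<one>) \<Longrightarrow> z \<in> cent N"
  proof -
    fix z k assume zc: "z \<in> carrier G" and hp: "\<And>n. n \<in> N \<Longrightarrow> (z \<otimes> n \<otimes> inv z \<otimes> inv n) [^] ((p::nat)^k) = \<one>"
    have "\<forall>n\<in>N. z \<otimes> n = n \<otimes> z"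
    proof
      fix n assume nN: "n \<in> N"
      have nc: "n \<in> carrier G" using nN NG by auto
      have "z \<otimes> n \<otimes> inv z \<in> N" using N_normal zc nN unfolding normal_inv_iff by blast
      hence cN: "z \<otimes> n \<otimes> inv z \<otimes> inv n \<in> N" using nN Nsub by (blast intro: subgroup.m_closed subgroup.m_inv_closed)
      have cc: "z \<otimes> n \<otimes> inv z \<otimes> inv n \<in> carrier G" using zc nc by simp
      have "z \<otimes> n \<otimes> inv z \<otimes> inv n = \<one>"
        using coprime_one[OF cc hp[OF nN] powN[OF cN] pp qp pq] .
      thus "z \<otimes> n = n \<otimes> z" using comm_of_commutator zc nc by blast
    qed
    thus "z \<in> cent N" using zc by (simp add: cent_def)
  qed
  have OpK: "\<And>K. subgroup K G \<Longrightarrow> K \<subseteq> HH \<Longrightarrow> (\<And>w. w \<in> K \<Longrightarrow> w \<in> cent N \<Longrightarrow> w = \<one>)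
     \<Longrightarrow> O_p (G\<lparr>carrier := N <#> K\<rparr>) p = {\<one>}"
  proof -
    fix K assume Ks: "subgroup K G" and KH: "K \<subseteq> HH" and Kf: "\<And>w. w \<in> K \<Longrightarrow> w \<in> cent N \<Longrightarrow> w = \<one>"
    define UK where "UK = N <#> K"
    have UKs: "subgroup UK G" unfolding UK_def using Ks by (rule NK_sub)
    interpret GU: group "G\<lparr>carrier := UK\<rparr>" using UKs by (rule subgroup_imp_group)
    have oneK: "\<one> \<in> K" using Ks subgroup.one_closed by blast
    have NUK: "N \<subseteq> UK"
    proof
      fix n assume nN: "n \<in> N"
      have "n \<otimes> \<one> \<in> UK" unfolding UK_def using nN oneK by (rule smI)
      thus "n \<in> UK" using nN NG by auto
    qed
    show "O_p (G\<lparr>carrier := N <#> K\<rparr>) p = {\<one>}" unfolding UK_def[symmetric]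
    proof (rule O_p_eqI)
      show "{\<one>} \<lhd> G\<lparr>carrier := UK\<rparr>" using GU.one_is_normal by simp
      have "subgroup {\<one>} (G\<lparr>carrier := UK\<rparr>)" using normal_imp_subgroup[OF GU.one_is_normal] by simp
      thus "p_subgroup (G\<lparr>carrier := UK\<rparr>) p {\<one>}" unfolding p_subgroup_def
        by (auto intro: exI[of _ 0])
      fix Q assume Qn: "Q \<lhd> G\<lparr>carrier := UK\<rparr>" and Qp: "p_subgroup (G\<lparr>carrier := UK\<rparr>) p Q"
      obtain k where Qs: "subgroup Q (G\<lparr>carrier := UK\<rparr>)" and Qf: "finite Q" and Qc: "card Q = p^k"
        using Qp unfolding p_subgroup_def by blast
      have QU: "Q \<subseteq> UK" using subgroup.subset[OF Qs] by simp
      have UKG: "UK \<subseteq> carrier G" using UKs subgroup.subset by blast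
      have powQ: "\<And>a. a \<in> Q \<Longrightarrow> a [^] (p^k) = \<one>"
      proof -
        fix a assume aQ: "a \<in> Q"
        have "a [^]\<^bsub>G\<lparr>carrier := UK\<rparr>\<^esub> card Q = \<one>\<^bsub>G\<lparr>carrier := UK\<rparr>\<^esub>" using GU.pow_card_one[OF Qs Qf aQ] .
        thus "a [^] (p^k) = \<one>" using Qc by (simp add: nat_pow_consistent[symmetric])
      qed
      have Qinv: "\<And>a. a \<in> Q \<Longrightarrow> inv a \<in> Q"
        using subgroup.m_inv_closed[OF Qs] m_inv_consistent[OF UKs] QU by (metis subsetD)
      have Qmult: "\<And>a b. a \<in> Q \<Longrightarrow> b \<in> Q \<Longrightarrow> a \<otimes> b \<in> Q"
        using subgroup.m_closed[OF Qs] by simp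
      have Qconj: "\<And>g a. g \<in> UK \<Longrightarrow> a \<in> Q \<Longrightarrow> g \<otimes> a \<otimes> inv g \<in> Q"
        using Qn unfolding GU.normal_inv_iff using m_inv_consistent[OF UKs] by simp
      show "Q \<subseteq> {\<one>}"
      proof
        fix z assume zQ: "z \<in> Q"
        have zU: "z \<in> UK" using zQ QU by auto
        have zc: "z \<in> carrier G" using zU UKG by auto
        have zcN: "z \<in> cent N"
        proof (rule comm_arg[OF zc, of k])
          fix n assume nN: "n \<in> N"
          have nc: "n \<in> carrier G" using nN NG by auto
          have "n \<otimes> inv z \<otimes> inv n \<in> Q" using Qconj[of n "inv z"] NUK nN Qinv zQ by auto
          hence "z \<otimes> (n \<otimes> inv z \<otimes> inv n) \<in> Q" using Qmult zQ by blast
          moreover have "z \<otimes> (n \<otimes> inv z \<otimes> inv n) = z \<otimes> n \<otimes> inv z \<otimes> inv n" using zc nc by (simp add: m_assoc)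
          ultimately show "(z \<otimes> n \<otimes> inv z \<otimes> inv n) [^] (p^k) = \<one>" using powQ by metis
        qed
        obtain m w where mN: "m \<in> N" and wK: "w \<in> K" and zmw: "z = m \<otimes> w"
          using zU unfolding UK_def by (metis smE)
        have mc: "m \<in> carrier G" using mN NG by auto
        have wc: "w \<in> carrier G" using wK Ks subgroup.subset by blast
        have weq: "w = inv m \<otimes> z" using zmw mc wc by (simp add: m_assoc[symmetric])
        have "inv m \<in> cent N" using N_ab mN centN by (blast intro: subgroup.m_inv_closed)
        hence "w \<in> cent N" using weq zcN centN by (simp add: subgroup.m_closed)
        hence "w = \<one>" using Kf wK by blast
        hence zm: "z = m" using zmw mc by simp
        show "z \<in> {\<one>}" using coprime_one[OF zc powQ[OF zQ] powN[OF mN[folded zm]] pp qp pq] by simp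
      qed
    qed
  qed
  have OpU: "O_p (G\<lparr>carrier := U\<rparr>) p = {\<one>}" unfolding U_def XX_def[symmetric]
    using Xsub XH faithful by (rule OpK)
  have OpV: "O_p (G\<lparr>carrier := V\<rparr>) p = {\<one>}" unfolding V_def WW_def[symmetric]
    using Wsub WH
  proof (rule OpK)
    fix w assume wW: "w \<in> WW" and wcN: "w \<in> cent N"
    obtain i :: int where wi: "w = (x \<otimes> y) [^] i" using wW unfolding WW_def generate_pow[OF xyc] by blast
    have w2: "w = x [^] i \<otimes> y [^] i" using wi int_pow_mult_distrib[OF xy x_in y_in] by simp
    have yiY: "y [^] i \<in> YY" unfolding YY_def generate_pow[OF y_in] by blast
    have xiX: "x [^] i \<in> XX" unfolding XX_def generate_pow[OF x_in] by blast
    have yic: "y [^] i \<in> cent N" using yiY Y_cN by auto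
    have "x [^] i = w \<otimes> inv (y [^] i)" using w2 x_in y_in by (simp add: m_assoc)
    hence "x [^] i \<in> cent N" using wcN yic centN by (simp add: subgroup.m_closed subgroup.m_inv_closed)
    hence "x [^] i = \<one>" using faithful xiX by blast
    hence "int (ord x) dvd i" using int_pow_eq_id[OF x_in] by simp
    hence "y [^] i = \<one>" using int_pow_eq_id[OF y_in] ordx ordy by simp
    thus "w = \<one>" using w2 \<open>x [^] i = \<one>\<close> by simp
  qed

  have YX: "HH \<subseteq> YY <#> XX"
  proof -
    interpret second_isomorphism_grp YY G XX
      using Y_normal Xsub by (intro second_isomorphism_grp.intro) (simp_all add: second_isomorphism_grp_axioms_def)
    have s: "subgroup (YY <#> XX) G" by (rule normal_set_mult_subgroup)
    have "\<one> \<otimes> x \<in> YY <#> XX" using oneY xX by (rule smI)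
    hence "x \<in> YY <#> XX" using x_in by simp
    moreover have "y \<otimes> \<one> \<in> YY <#> XX" using yY oneX by (rule smI)
    hence "y \<in> YY <#> XX" using y_in by simp
    ultimately show ?thesis unfolding HH_def using s by (intro generate_subgroup_incl) auto
  qed
  have OpG: "O_p G p = YY"
  proof (rule O_p_eqI)
    show "YY \<lhd> G" by (rule Y_normal)
    show "p_subgroup G p YY" unfolding p_subgroup_def using Ysub finY cardY by (auto intro: exI[of _ 1])
    fix Q assume Qn: "Q \<lhd> G" and Qp: "p_subgroup G p Q"
    obtain k where Qs: "subgroup Q G" and Qf: "finite Q" and Qc: "card Q = p^k"
      using Qp unfolding p_subgroup_def by blast
    have powQ: "\<And>a. a \<in> Q \<Longrightarrow> a [^] (p^k) = \<one>" using pow_card_one[OF Qs Qf] Qc by simp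
    have QG: "Q \<subseteq> carrier G" using Qs subgroup.subset by blast
    have Qconj: "\<forall>g\<in>carrier G. \<forall>h\<in>Q. g \<otimes> h \<otimes> inv g \<in> Q" using Qn normal_inv_iff by blast
    show "Q \<subseteq> YY"
    proof
      fix z assume zQ: "z \<in> Q"
      have zc: "z \<in> carrier G" using zQ QG by auto
      have zcN: "z \<in> cent N"
      proof (rule comm_arg[OF zc, of k])
        fix n assume nN: "n \<in> N"
        have nc: "n \<in> carrier G" using nN NG by auto
        have "inv z \<in> Q" by (rule subgroup.m_inv_closed[OF Qs zQ])
        hence "n \<otimes> inv z \<otimes> inv n \<in> Q" using Qconj nc by blast
        hence "z \<otimes> (n \<otimes> inv z \<otimes> inv n) \<in> Q" by (rule subgroup.m_closed[OF Qs zQ])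
        moreover have "z \<otimes> (n \<otimes> inv z \<otimes> inv n) = z \<otimes> n \<otimes> inv z \<otimes> inv n" using zc nc by (simp add: m_assoc)
        ultimately show "(z \<otimes> n \<otimes> inv z \<otimes> inv n) [^] (p^k) = \<one>" using powQ by metis
      qed
      obtain m h where mN: "m \<in> N" and hH: "h \<in> HH" and zmh: "z = m \<otimes> h"
        using zc NH unfolding HH_def by (metis smE)
      obtain b a where bY: "b \<in> YY" and aX: "a \<in> XX" and hba: "h = b \<otimes> a"
        using hH YX by (metis smE subsetD)
      have mc: "m \<in> carrier G" using mN NG by auto
      have bc: "b \<in> carrier G" using bY Ysub subgroup.subset by blast
      have ac: "a \<in> carrier G" using aX Xsub subgroup.subset by blast
      have aeq: "a = inv b \<otimes> (inv m \<otimes> z)" using zmh hba mc bc ac by (simp add: m_assoc[symmetric])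
      have "inv m \<in> cent N" using N_ab mN centN by (blast intro: subgroup.m_inv_closed)
      moreover have "inv b \<in> cent N" using Y_cN bY centN by (blast intro: subgroup.m_inv_closed)
      ultimately have "a \<in> cent N" using aeq zcN centN by (simp add: subgroup.m_closed)
      hence "a = \<one>" using faithful aX by blast
      hence zmb: "z = m \<otimes> b" using zmh hba bc by simp
      show "z \<in> YY"
      proof (cases "k = 0")
        case True
        have "\<one> \<in> Q" using Qs subgroup.one_closed by blast
        moreover have "card Q = 1" using Qc True by simp
        then obtain c where "Q = {c}" by (rule card_1_singletonE)
        ultimately have "z = \<one>" using zQ by simp
        thus ?thesis using oneY by simp
      next
        case False
        have bp: "b [^] p = \<one>" using pow_card_one[OF Ysub finY bY] cardY by simp
        have "p^k = p * p^(k-1)" using False by (cases k) auto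
        hence bpk: "b [^] (p^k) = \<one>" using bp bc by (simp add: nat_pow_pow[symmetric])
        have mb: "m \<otimes> b = b \<otimes> m" using Y_central bY mc by (auto simp: cent_def)
        have "\<one> = z [^] (p^k)" using powQ zQ by simp
        also have "\<dots> = m [^] (p^k) \<otimes> b [^] (p^k)" using zmb pow_mult_distrib[OF mb mc bc] by simp
        also have "\<dots> = m [^] (p^k)" using bpk mc by simp
        finally have "m [^] (p^k) = \<one>" by simp
        hence "m = \<one>" using coprime_one[OF mc _ powN[OF mN] pp qp pq] by blast
        thus ?thesis using zmb bY bc by simp
      qed
    qed
  qed
  have one11: "{\<one>} <#> {\<one>} = {\<one>}" unfolding set_mult_def by simp
  have "YY \<noteq> {\<one>}"
  proof
    assume "YY = {\<one>}"
    hence "p = 1" using cardY by simp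
    thus False using pp by simp
  qed
  thus ?thesis using subU subV UV OpG OpU OpV one11 unfolding YY_def by simp
qed

end
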